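(* Let $M$ be a monoid and let $\chi=(r_0,T,\alpha,\theta)$ be an elliptic $M$-tree. Define $D_\chi:M\times M\to\overline{\mathbb N}$ by $D_\chi(m,m')=|\alpha m\wedge\alpha m'|$. Then: (i) $D_\chi$ is a length function for $M$; (ii) if $\mathrm{dep}(r_0,T)=l\in\mathbb N$, then the function $d(m,m')=2l-2D_\chi(m,m')$ satisfies $d(m,m')=d_T(\alpha_l m,\alpha_l m')$; (iii) if $\mathrm{dep}(r_0,T)=l\in\mathbb N$ and $\chi$ is strongly faithful, then $d$ is an ultrametric (in particular $d(m,m')=0$ implies $m=m'$).
   Context: $\overline{\mathbb N}=\mathbb N\cup\{\omega\}$. Rooted tree $(r_0,T)$: tree with root $r_0$, $\mathrm{dep}(v)=d_T(r_0,v)$, $\mathrm{dep}(r_0,T)=\sup_v\mathrm{dep}(v)$. A ray is either a geodesic $(\alpha_l,\dots,\alpha_1,\alpha_0=r_0)$ (length $|\alpha|=l$) or an infinite path $(\dots,\alpha_1,\alpha_0=r_0)$ with $\mathrm{dep}(\alpha_i)=i$ (length $\omega$); $\alpha\le\beta$ if $|\alpha|\le|\beta|$ and $\alpha_i=\beta_i$ for all $i\le|\alpha|$; maximal rays are maximal for $\le$; $(r_0,T)$ is uniform if all maximal rays have the same length. $\alpha\wedge\beta$ is the longest common initial segment of $\alpha$ and $\beta$ (equal to $\alpha$ if $\alpha=\beta$). Elliptic contractions are depth-preserving, distance-non-increasing maps of vertices; $\mathrm{Ell}(r_0,T)$ is their monoid. An elliptic action is a monoid homomorphism $\theta:M\to\mathrm{Ell}(r_0,T)$,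 written $v\mapsto vm$, extended to rays by $\alpha m=(\dots,\alpha_1m,\alpha_0m)$. An elliptic $M$-tree is $\chi=(r_0,T,\alpha,\theta)$ with $(r_0,T)$ uniform, $\alpha$ a maximal ray and $\theta$ an elliptic action that is $\alpha$-transitive: $\mathrm{Vert}(T)=\bigcup_i\alpha_iM$. It is strongly faithful if $\alpha m=\alpha m'$ implies $m=m'$. A length function for $M$ is $D:M\times M\to\overline{\mathbb N}$ with (L1) $D(m,m')=D(m',m)$; (L2) $D(m',m'')\le D(m,m)$; (L3) $D(m',m'')\le D(m'm,m''m)$; (L4) $D(m,m'')\ge\min\{D(m,m'),D(m',m'')\}$, for all $m,m',m''$. *)

theory Defs
  imports Main "HOL-Library.Extended_Nat"
begin

definition walk :: "'v set \<Rightarrow> ('v \<times> 'v) set \<Rightarrow> 'v list \<Rightarrow> 'v \<Rightarrow> 'v \<Rightarrow> bool" where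
  "walk V E xs u v \<longleftrightarrow> xs \<noteq> [] \<and> hd xs = u \<and> last xs = v \<and> set xs \<subseteq> V \<and>
     (\<forall>i. Suc i < length xs \<longrightarrow> (xs ! i, xs ! Suc i) \<in> E)"

definition gpath :: "'v set \<Rightarrow> ('v \<times> 'v) set \<Rightarrow> 'v list \<Rightarrow> 'v \<Rightarrow> 'v \<Rightarrow> bool" where
  "gpath V E xs u v \<longleftrightarrow> walk V E xs u v \<and> distinct xs"

definition tree :: "'v set \<Rightarrow> ('v \<times> 'v) set \<Rightarrow> bool" where
  "tree V E \<longleftrightarrow> V \<noteq> {} \<and> E \<subseteq> V \<times> V \<and> sym E \<and> (\<forall>v. (v, v) \<notin> E) \<and>
     (\<forall>u\<in>V. \<forall>v\<in>V. \<exists>!xs. gpath V E xs u v)"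

definition tdist :: "'v set \<Rightarrow> ('v \<times> 'v) set \<Rightarrow> 'v \<Rightarrow> 'v \<Rightarrow> nat" where
  "tdist V E u v = (LEAST n. \<exists>xs. walk V E xs u v \<and> length xs = Suc n)"

definition rooted_tree :: "'v set \<Rightarrow> ('v \<times> 'v) set \<Rightarrow> 'v \<Rightarrow> bool" where
  "rooted_tree V E r0 \<longleftrightarrow> tree V E \<and> r0 \<in> V"

text \<open>depth of a vertex and of the rooted tree (in enat, \<infinity> playing the role of omega)\<close>
definition dep :: "'v set \<Rightarrow> ('v \<times> 'v) set \<Rightarrow> 'v \<Rightarrow> 'v \<Rightarrow> nat" where
  "dep V E r0 v = tdist V E r0 v"

definition dep_tree :: "'v set \<Rightarrow> ('v \<times> 'v) set \<Rightarrow> 'v \<Rightarrow> enat" where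
  "dep_tree V E r0 = (SUP v\<in>V. enat (dep V E r0 v))"

text \<open>A ray is represented as a partial map \<open>nat \<rightharpoonup> 'v\<close>, \<open>i \<mapsto> \<alpha>_i\<close>, whose domain is
  an initial segment of nat containing 0 (all of nat for rays of length omega),
  with \<open>\<alpha>_0 = r0\<close> and \<open>d_T(\<alpha>_i,\<alpha>_j) = |i - j|\<close> (geodesic).\<close>
definition ray :: "'v set \<Rightarrow> ('v \<times> 'v) set \<Rightarrow> 'v \<Rightarrow> (nat \<Rightarrow> 'v option) \<Rightarrow> bool" where
  "ray V E r0 \<alpha> \<longleftrightarrow> \<alpha> 0 = Some r0 \<and>
     (\<forall>i j. j \<le> i \<longrightarrow> \<alpha> i \<noteq> None \<longrightarrow> \<alpha> j \<noteq> None) \<and>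
     (\<forall>i j x y. \<alpha> i = Some x \<longrightarrow> \<alpha> j = Some y \<longrightarrow>
        x \<in> V \<and> y \<in> V \<and> tdist V E x y = (if i \<le> j then j - i else i - j))"

definition ray_len :: "(nat \<Rightarrow> 'v option) \<Rightarrow> enat" where
  "ray_len \<alpha> = (if finite (dom \<alpha>) then enat (Max (dom \<alpha>)) else \<infinity>)"

definition ray_le :: "(nat \<Rightarrow> 'v option) \<Rightarrow> (nat \<Rightarrow> 'v option) \<Rightarrow> bool" where
  "ray_le \<alpha> \<beta> \<longleftrightarrow> ray_len \<alpha> \<le> ray_len \<beta> \<and> (\<forall>i. enat i \<le> ray_len \<alpha> \<longrightarrow> \<alpha> i = \<beta> i)"

definition maximal_ray :: "'v set \<Rightarrow> ('v \<times> 'v) set \<Rightarrow> 'v \<Rightarrow> (nat \<Rightarrow> 'v option) \<Rightarrow> bool" where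
  "maximal_ray V E r0 \<alpha> \<longleftrightarrow> ray V E r0 \<alpha> \<and>
     (\<forall>\<beta>. ray V E r0 \<beta> \<longrightarrow> ray_le \<alpha> \<beta> \<longrightarrow> \<beta> = \<alpha>)"

definition uniform :: "'v set \<Rightarrow> ('v \<times> 'v) set \<Rightarrow> 'v \<Rightarrow> bool" where
  "uniform V E r0 \<longleftrightarrow> (\<forall>\<alpha> \<beta>. maximal_ray V E r0 \<alpha> \<longrightarrow> maximal_ray V E r0 \<beta> \<longrightarrow>
     ray_len \<alpha> = ray_len \<beta>)"

definition ray_meet :: "(nat \<Rightarrow> 'v option) \<Rightarrow> (nat \<Rightarrow> 'v option) \<Rightarrow> (nat \<Rightarrow> 'v option)" where
  "ray_meet \<alpha> \<beta> = (\<lambda>i. if \<forall>j\<le>i. \<alpha> j = \<beta> j then \<alpha> i else None)"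

definition elliptic_contraction :: "'v set \<Rightarrow> ('v \<times> 'v) set \<Rightarrow> 'v \<Rightarrow> ('v \<Rightarrow> 'v) \<Rightarrow> bool" where
  "elliptic_contraction V E r0 f \<longleftrightarrow>
     (\<forall>v\<in>V. f v \<in> V \<and> dep V E r0 (f v) = dep V E r0 v) \<and>
     (\<forall>u\<in>V. \<forall>v\<in>V. tdist V E (f u) (f v) \<le> tdist V E u v)"

text \<open>An elliptic action, written as a right action \<open>v \<mapsto> vm = \<theta> m v\<close>, so that
  \<open>v(mm') = (vm)m'\<close> and \<open>v1 = v\<close> (on the vertex set).\<close>
definition elliptic_action :: "'v set \<Rightarrow> ('v \<times> 'v) set \<Rightarrow> 'v \<Rightarrow> ('m::monoid_mult \<Rightarrow> 'v \<Rightarrow> 'v) \<Rightarrow> bool" where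
  "elliptic_action V E r0 \<theta> \<longleftrightarrow> (\<forall>m. elliptic_contraction V E r0 (\<theta> m)) \<and>
     (\<forall>v\<in>V. \<theta> 1 v = v) \<and> (\<forall>m m'. \<forall>v\<in>V. \<theta> (m * m') v = \<theta> m' (\<theta> m v))"

definition ray_act :: "('m \<Rightarrow> 'v \<Rightarrow> 'v) \<Rightarrow> 'm \<Rightarrow> (nat \<Rightarrow> 'v option) \<Rightarrow> (nat \<Rightarrow> 'v option)" where
  "ray_act \<theta> m \<alpha> = (\<lambda>i. map_option (\<theta> m) (\<alpha> i))"

definition alpha_transitive :: "'v set \<Rightarrow> (nat \<Rightarrow> 'v option) \<Rightarrow> ('m \<Rightarrow> 'v \<Rightarrow> 'v) \<Rightarrow> bool" where
  "alpha_transitive V \<alpha> \<theta> \<longleftrightarrow> V = (\<Union>i\<in>dom \<alpha>. range (\<lambda>m. \<theta> m (the (\<alpha> i))))"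

definition elliptic_Mtree ::
  "'v set \<Rightarrow> ('v \<times> 'v) set \<Rightarrow> 'v \<Rightarrow> (nat \<Rightarrow> 'v option) \<Rightarrow> ('m::monoid_mult \<Rightarrow> 'v \<Rightarrow> 'v) \<Rightarrow> bool" where
  "elliptic_Mtree V E r0 \<alpha> \<theta> \<longleftrightarrow> rooted_tree V E r0 \<and> uniform V E r0 \<and>
     maximal_ray V E r0 \<alpha> \<and> elliptic_action V E r0 \<theta> \<and> alpha_transitive V \<alpha> \<theta>"

definition strongly_faithful :: "(nat \<Rightarrow> 'v option) \<Rightarrow> ('m \<Rightarrow> 'v \<Rightarrow> 'v) \<Rightarrow> bool" where
  "strongly_faithful \<alpha> \<theta> \<longleftrightarrow> (\<forall>m m'. ray_act \<theta> m \<alpha> = ray_act \<theta> m' \<alpha> \<longrightarrow> m = m')"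

definition length_function :: "('m::monoid_mult \<Rightarrow> 'm \<Rightarrow> enat) \<Rightarrow> bool" where
  "length_function D \<longleftrightarrow>
     (\<forall>m m'. D m m' = D m' m) \<and>
     (\<forall>m m' m''. D m' m'' \<le> D m m) \<and>
     (\<forall>m m' m''. D m' m'' \<le> D (m' * m) (m'' * m)) \<and>
     (\<forall>m m' m''. D m m'' \<ge> min (D m m') (D m' m''))"

definition D_chi :: "('m \<Rightarrow> 'v \<Rightarrow> 'v) \<Rightarrow> (nat \<Rightarrow> 'v option) \<Rightarrow> 'm \<Rightarrow> 'm \<Rightarrow> enat" where
  "D_chi \<theta> \<alpha> m m' = ray_len (ray_meet (ray_act \<theta> m \<alpha>) (ray_act \<theta> m' \<alpha>))"

text \<open>An ultrametric with values in the natural numbers (finite values of enat).\<close>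
definition ultrametric :: "('m \<Rightarrow> 'm \<Rightarrow> enat) \<Rightarrow> bool" where
  "ultrametric d \<longleftrightarrow> (\<forall>x y. d x y \<noteq> \<infinity>) \<and>
     (\<forall>x y. d x y = 0 \<longleftrightarrow> x = y) \<and> (\<forall>x y. d x y = d y x) \<and>
     (\<forall>x y z. d x z \<le> max (d x y) (d y z))"

end

theory Submission imports Defs begin

lemma walk_succ: "walk V E xs u v \<longleftrightarrow> xs \<noteq> [] \<and> hd xs = u \<and> last xs = v \<and> set xs \<subseteq> V \<and>
     successively (\<lambda>x y. (x,y) \<in> E) xs"
  unfolding walk_def successively_conv_nth by simp

lemma succ_cut:
  assumes "successively P (a @ [y] @ b @ [y] @ c)"
  shows "successively P (a @ [y] @ c)"
proof -
  have e: "a @ [y] @ b @ [y] @ c = a @ ((y # b) @ (y # c))" by simp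
  have "successively P ((y # b) @ (y # c))" using assms unfolding e successively_append_iff by blast
  hence c: "successively P (y # c)" unfolding successively_append_iff by blast
  have a: "successively P a" "a = [] \<or> P (last a) y"
    using assms unfolding e successively_append_iff by auto
  have "successively P (a @ (y # c))" unfolding successively_append_iff using a c by auto
  thus ?thesis by simp
qed

lemma walk_shorten:
  assumes "walk V E ws u v" "\<not> distinct ws"
  shows "\<exists>ws'. walk V E ws' u v \<and> length ws' < length ws"
proof -
  obtain xs ys zs y where ws: "ws = xs@[y]@ys@[y]@zs" using not_distinct_decomp[OF assms(2)] by blast
  have "walk V E (xs@[y]@zs) u v"
    using assms(1) succ_cut[of "\<lambda>x y. (x,y) \<in> E" xs y ys zs] unfolding walk_succ ws
    by (auto simp: hd_append split: if_splits)
  thus ?thesis using ws by auto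
qed

lemma tree_ex1:
  assumes "tree V E" "u \<in> V" "v \<in> V"
  shows "\<exists>!xs. gpath V E xs u v"
proof -
  have h: "\<forall>u\<in>V. \<forall>v\<in>V. \<exists>!xs. gpath V E xs u v" using assms(1) unfolding tree_def by (elim conjE)
  show ?thesis by (rule bspec[OF bspec[OF h assms(2)] assms(3)])
qed

lemma tree_gpath_ex:
  assumes "tree V E" "u \<in> V" "v \<in> V"
  obtains xs where "gpath V E xs u v"
  using ex1_implies_ex[OF tree_ex1[OF assms]] by (elim exE)

lemma tree_uniq:
  assumes "tree V E" "u \<in> V" "v \<in> V" "gpath V E xs u v" "gpath V E ys u v"
  shows "xs = ys"
proof -
  obtain z where z: "gpath V E z u v" "\<And>y. gpath V E y u v \<Longrightarrow> y = z"
    using tree_ex1[OF assms(1-3)] by (elim ex1E) blast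
  show ?thesis using z(2)[OF assms(4)] z(2)[OF assms(5)] by simp
qed

lemma tdist_gpath:
  assumes "tree V E" "gpath V E xs u v"
  shows "tdist V E u v = length xs - 1"
proof -
  let ?P = "\<lambda>n. \<exists>ws. walk V E ws u v \<and> length ws = Suc n"
  have xs: "walk V E xs u v" "distinct xs" using assms(2) by (auto simp: gpath_def)
  have "xs \<noteq> []" using xs by (simp add: walk_def)
  hence P: "?P (length xs - 1)" using xs by (intro exI[of _ xs]) auto
  have "?P (tdist V E u v)" unfolding tdist_def by (rule LeastI_ex) (rule exI, rule P)
  then obtain ws where ws: "walk V E ws u v" "length ws = Suc (tdist V E u v)"
    by (elim exE conjE)
  have "distinct ws"
  proof (rule ccontr)
    assume nd: "\<not> distinct ws"
    obtain ws' where w: "walk V E ws' u v" "length ws' < length ws"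
      using walk_shorten[OF ws(1) nd] by (elim exE conjE)
    have ne: "ws' \<noteq> []" using w(1) unfolding walk_def by (elim conjE)
    have "?P (length ws' - 1)"
      by (rule exI[of _ ws'], rule conjI, rule w(1)) (use ne in simp)
    hence "tdist V E u v \<le> length ws' - 1" unfolding tdist_def by (rule Least_le)
    thus False using w(2) ws(2) ne by (cases ws') simp_all
  qed
  have uv: "u \<in> V" "v \<in> V" using xs \<open>xs \<noteq> []\<close> by (auto simp: walk_def)
  have "gpath V E ws u v" using ws \<open>distinct ws\<close> by (simp add: gpath_def)
  hence "ws = xs" using tree_uniq[OF assms(1) uv _ assms(2)] by blast
  thus ?thesis using ws by simp
qed


lemma tdist0:
  assumes "tree V E" "u \<in> V" "v \<in> V" "tdist V E u v = 0"
  shows "u = v"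
proof -
  obtain xs where g: "gpath V E xs u v" by (rule tree_gpath_ex[OF assms(1-3)])
  have ne: "xs \<noteq> []" using g unfolding gpath_def walk_def by (elim conjE)
  have "length xs = 1" using tdist_gpath[OF assms(1) g] assms(4) ne
    by (cases xs) simp_all
  then obtain x where "xs = [x]" by (cases xs) auto
  thus ?thesis using g by (auto simp: gpath_def walk_def)
qed

lemma tdist1:
  assumes "tree V E" "u \<in> V" "v \<in> V" "tdist V E u v = 1"
  shows "(u,v) \<in> E"
proof -
  obtain xs where g: "gpath V E xs u v" by (rule tree_gpath_ex[OF assms(1-3)])
  have ne: "xs \<noteq> []" using g unfolding gpath_def walk_def by (elim conjE)
  have "length xs = 2" using tdist_gpath[OF assms(1) g] assms(4) ne
    by (cases xs) simp_all
  then obtain x y where "xs = [x,y]" by (cases xs; cases "tl xs") auto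
  thus ?thesis using g by (auto simp: gpath_def walk_succ)
qed

lemma tdist_refl:
  assumes "u \<in> V" shows "tdist V E u u = 0"
  unfolding tdist_def
  by (rule Least_eq_0) (rule exI[of _ "[u]"], simp add: walk_def assms)

lemma succ_map_upt:
  assumes "\<And>i. m \<le> i \<Longrightarrow> Suc i < n \<Longrightarrow> P (f i) (f (Suc i))"
  shows "successively P (map f [m..<n])"
  unfolding successively_conv_nth using assms by auto


lemma chi_facts:
  assumes "elliptic_Mtree V E r0 \<alpha> \<theta>"
  shows "tree V E" "r0 \<in> V" "ray V E r0 \<alpha>"
    "\<And>m x. x \<in> V \<Longrightarrow> \<theta> m x \<in> V"
    "\<And>m x. x \<in> V \<Longrightarrow> tdist V E r0 (\<theta> m x) = tdist V E r0 x"
    "\<And>m x y. x \<in> V \<Longrightarrow> y \<in> V \<Longrightarrow> tdist V E (\<theta> m x) (\<theta> m y) \<le> tdist V E x y"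
    "\<And>m m' x. x \<in> V \<Longrightarrow> \<theta> (m * m') x = \<theta> m' (\<theta> m x)"
    "alpha_transitive V \<alpha> \<theta>"
  using assms unfolding elliptic_Mtree_def rooted_tree_def maximal_ray_def elliptic_action_def
    elliptic_contraction_def dep_def by auto

lemma ray_vals:
  assumes "ray V E r0 \<alpha>" "\<alpha> i = Some x"
  shows "x \<in> V" "tdist V E r0 x = i"
proof -
  have "x \<in> V \<and> r0 \<in> V \<and> tdist V E r0 x = (if 0 \<le> i then i - 0 else 0 - i)"
    using assms unfolding ray_def by blast
  thus "x \<in> V" "tdist V E r0 x = i" by simp_all
qed

lemma ray_down:
  assumes "ray V E r0 \<alpha>" "j \<le> i" "\<alpha> i \<noteq> None"
  shows "\<alpha> j \<noteq> None"
  using assms unfolding ray_def by blast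

lemma ray_step:
  assumes "ray V E r0 \<alpha>" "\<alpha> j = Some x" "\<alpha> (Suc j) = Some y"
  shows "tdist V E x y = 1"
proof -
  have "tdist V E x y = (if j \<le> Suc j then Suc j - j else j - Suc j)"
    using assms unfolding ray_def by blast
  thus ?thesis by simp
qed

lemma theta_root:
  assumes chi: "elliptic_Mtree V E r0 \<alpha> \<theta>"
  shows "\<theta> m r0 = r0"
proof -
  note c = chi_facts[OF chi]
  have "tdist V E r0 (\<theta> m r0) = 0" using c(5)[OF c(2)] tdist_refl[OF c(2)] by simp
  hence "r0 = \<theta> m r0" by (rule tdist0[OF c(1) c(2) c(4)[OF c(2)]])
  thus ?thesis by simp
qed

lemma act_vals:
  assumes chi: "elliptic_Mtree V E r0 \<alpha> \<theta>" "\<alpha> j = Some x"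
  shows "\<theta> m x \<in> V" "tdist V E r0 (\<theta> m x) = j"
proof -
  have x: "x \<in> V" "tdist V E r0 x = j" using ray_vals[OF chi_facts(3)[OF chi(1)] chi(2)] by blast+
  show "\<theta> m x \<in> V" by (rule chi_facts(4)[OF chi(1) x(1)])
  show "tdist V E r0 (\<theta> m x) = j" using chi_facts(5)[OF chi(1) x(1)] x(2) by simp
qed

lemma act_edge:
  assumes chi: "elliptic_Mtree V E r0 \<alpha> \<theta>" "\<alpha> j = Some x" "\<alpha> (Suc j) = Some y"
  shows "(\<theta> m x, \<theta> m y) \<in> E"
proof -
  note c = chi_facts[OF chi(1)]
  have xy: "x \<in> V" "y \<in> V" using ray_vals(1)[OF c(3) chi(2)] ray_vals(1)[OF c(3) chi(3)] by blast+
  have "tdist V E (\<theta> m x) (\<theta> m y) \<le> 1" using c(6)[OF xy] ray_step[OF c(3) chi(2,3)] by simp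
  moreover have "tdist V E (\<theta> m x) (\<theta> m y) \<noteq> 0"
  proof
    assume "tdist V E (\<theta> m x) (\<theta> m y) = 0"
    hence "\<theta> m x = \<theta> m y" using tdist0[OF c(1)] c(4) xy by blast
    thus False using act_vals[OF chi(1) chi(2), of m] act_vals[OF chi(1) chi(3), of m] by simp
  qed
  ultimately have "tdist V E (\<theta> m x) (\<theta> m y) = 1" by linarith
  thus ?thesis using tdist1[OF c(1)] c(4) xy by blast
qed


lemma root_gpath:
  assumes chi: "elliptic_Mtree V E r0 \<alpha> \<theta>" and n: "\<alpha> n \<noteq> None"
  shows "gpath V E (map (\<lambda>j. \<theta> m (the (\<alpha> j))) [0..<Suc n]) r0 (\<theta> m (the (\<alpha> n)))"
proof -
  note c = chi_facts[OF chi]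
  let ?a = "\<lambda>j. \<theta> m (the (\<alpha> j))"
  have some: "\<And>j. j \<le> n \<Longrightarrow> \<alpha> j = Some (the (\<alpha> j))" using ray_down[OF c(3) _ n] by auto
  have V: "\<And>j. j \<le> n \<Longrightarrow> ?a j \<in> V" and d: "\<And>j. j \<le> n \<Longrightarrow> tdist V E r0 (?a j) = j"
    using act_vals[OF chi some] by auto
  have a0: "?a 0 = r0" using c(3) theta_root[OF chi] unfolding ray_def by simp
  have "inj_on ?a {0..<Suc n}" by (rule inj_onI) (metis d atLeastLessThan_iff less_Suc_eq_le)
  hence dist: "distinct (map ?a [0..<Suc n])" by (simp add: distinct_map del: upt_Suc)
  have "successively (\<lambda>x y. (x,y) \<in> E) (map ?a [0..<Suc n])"
  proof (rule succ_map_upt)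
    fix i assume "0 \<le> i" "Suc i < Suc n"
    hence "\<alpha> i = Some (the (\<alpha> i))" "\<alpha> (Suc i) = Some (the (\<alpha> (Suc i)))" using some by auto
    thus "(?a i, ?a (Suc i)) \<in> E" by (rule act_edge[OF chi])
  qed
  moreover have "last (map ?a [0..<Suc n]) = ?a n" by simp
  moreover have "hd (map ?a [0..<Suc n]) = ?a 0" by (simp add: hd_map del: upt_Suc)
  moreover have "set (map ?a [0..<Suc n]) \<subseteq> V" using V by (auto simp del: upt_Suc)
  ultimately show ?thesis using dist a0 unfolding gpath_def walk_succ by (simp del: upt_Suc)
qed

lemma root_unique:
  assumes chi: "elliptic_Mtree V E r0 \<alpha> \<theta>" and n: "\<alpha> n \<noteq> None"
    and eq: "\<theta> m (the (\<alpha> n)) = \<theta> m' (the (\<alpha> n))" and i: "i \<le> n"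
  shows "\<theta> m (the (\<alpha> i)) = \<theta> m' (the (\<alpha> i))"
proof -
  note c = chi_facts[OF chi]
  have g1: "gpath V E (map (\<lambda>j. \<theta> m (the (\<alpha> j))) [0..<Suc n]) r0 (\<theta> m (the (\<alpha> n)))"
    by (rule root_gpath[OF chi n])
  have g2: "gpath V E (map (\<lambda>j. \<theta> m' (the (\<alpha> j))) [0..<Suc n]) r0 (\<theta> m (the (\<alpha> n)))"
    using root_gpath[OF chi n, of m'] eq by simp
  have "\<theta> m (the (\<alpha> n)) \<in> V" using act_vals[OF chi, of n "the (\<alpha> n)"] n by auto
  hence "map (\<lambda>j. \<theta> m (the (\<alpha> j))) [0..<Suc n] = map (\<lambda>j. \<theta> m' (the (\<alpha> j))) [0..<Suc n]"
    using tree_uniq[OF c(1) c(2) _ g1 g2] by blast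
  hence "\<forall>j\<in>set [0..<Suc n]. \<theta> m (the (\<alpha> j)) = \<theta> m' (the (\<alpha> j))"
    by (simp only: map_eq_conv)
  thus ?thesis using i by (simp del: upt_Suc)
qed


lemma ray_len_ge: "i \<in> dom f \<Longrightarrow> enat i \<le> ray_len f"
  unfolding ray_len_def by auto

lemma ray_len_mono:
  assumes "dom f \<subseteq> dom g" "dom f \<noteq> {}"
  shows "ray_len f \<le> ray_len g"
proof (cases "finite (dom g)")
  case True
  hence "finite (dom f)" using assms(1) finite_subset by blast
  hence "Max (dom f) \<le> Max (dom g)" using True assms by (intro Max_mono) auto
  thus ?thesis using True \<open>finite (dom f)\<close> unfolding ray_len_def by simp
qed (simp add: ray_len_def)

lemma ray_len_down:
  assumes "\<forall>i j. j \<le> i \<longrightarrow> f i \<noteq> None \<longrightarrow> f j \<noteq> None" "enat i \<le> ray_len f" "dom f \<noteq> {}"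
  shows "i \<in> dom f"
proof (cases "finite (dom f)")
  case True
  hence "i \<le> Max (dom f)" using assms(2) unfolding ray_len_def by auto
  moreover have "dom f \<noteq> {}" by fact
  ultimately show ?thesis using assms(1) Max_in[OF True] by blast
next
  case False
  then obtain j where "j \<in> dom f" "i \<le> j" using infinite_nat_iff_unbounded_le by blast
  thus ?thesis using assms(1) by blast
qed

lemma meet_down:
  assumes "\<forall>i j. j \<le> i \<longrightarrow> f i \<noteq> None \<longrightarrow> f j \<noteq> None"
  shows "\<forall>i j. j \<le> i \<longrightarrow> ray_meet f g i \<noteq> None \<longrightarrow> ray_meet f g j \<noteq> None"
proof (intro allI impI)
  fix i j assume ji: "j \<le> i" and n: "ray_meet f g i \<noteq> None"
  hence ag: "\<forall>k\<le>i. f k = g k" and fi: "f i \<noteq> None" unfolding ray_meet_def by (auto split: if_splits)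
  have "f j \<noteq> None" using assms ji fi by blast
  moreover have "\<forall>k\<le>j. f k = g k" using ag ji by auto
  ultimately show "ray_meet f g j \<noteq> None" unfolding ray_meet_def by simp
qed

lemma meet_key: "dom (ray_meet f g) \<inter> dom (ray_meet g h) \<subseteq> dom (ray_meet f h)"
proof
  fix i assume "i \<in> dom (ray_meet f g) \<inter> dom (ray_meet g h)"
  hence a: "\<forall>j\<le>i. f j = g j" "f i \<noteq> None" "\<forall>j\<le>i. g j = h j"
    unfolding ray_meet_def dom_def by (auto split: if_splits)
  hence "\<forall>j\<le>i. f j = h j" by simp
  thus "i \<in> dom (ray_meet f h)" using a(2) unfolding ray_meet_def dom_def by simp
qed

lemma meet_self: "ray_meet f f = f" unfolding ray_meet_def by simp

lemma act_down:
  assumes "ray V E r0 \<alpha>"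
  shows "\<forall>i j. j \<le> i \<longrightarrow> ray_act \<theta> m \<alpha> i \<noteq> None \<longrightarrow> ray_act \<theta> m \<alpha> j \<noteq> None"
  using assms unfolding ray_def ray_act_def by auto

lemma meet0:
  assumes chi: "elliptic_Mtree V E r0 \<alpha> \<theta>"
  shows "0 \<in> dom (ray_meet (ray_act \<theta> m \<alpha>) (ray_act \<theta> m' \<alpha>))"
  using chi_facts(3)[OF chi] theta_root[OF chi] unfolding ray_def ray_meet_def ray_act_def by auto

lemma part1:
  assumes chi: "elliptic_Mtree V E r0 \<alpha> \<theta>"
  shows "length_function (D_chi \<theta> \<alpha>)"
proof -
  note c = chi_facts[OF chi]
  let ?r = "\<lambda>m. ray_act \<theta> m \<alpha>"
  have L1: "\<And>m m'. D_chi \<theta> \<alpha> m m' = D_chi \<theta> \<alpha> m' m"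
  proof -
    fix m m'
    have "ray_meet (?r m) (?r m') = ray_meet (?r m') (?r m)"
      unfolding ray_meet_def by (rule ext) auto
    thus "D_chi \<theta> \<alpha> m m' = D_chi \<theta> \<alpha> m' m" unfolding D_chi_def by simp
  qed
  have L2: "D_chi \<theta> \<alpha> m' m'' \<le> D_chi \<theta> \<alpha> m m" for m m' m''
    unfolding D_chi_def meet_self
  proof (rule ray_len_mono)
    show "dom (ray_meet (?r m') (?r m'')) \<subseteq> dom (?r m)"
      by (auto simp: ray_meet_def ray_act_def split: if_splits)
    show "dom (ray_meet (?r m') (?r m'')) \<noteq> {}" using meet0[OF chi, of m' m''] by blast
  qed
  have L3: "\<And>m m' m''. D_chi \<theta> \<alpha> m' m'' \<le> D_chi \<theta> \<alpha> (m' * m) (m'' * m)"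
  proof -
    fix m m' m''
    have r: "?r (x * m) i = map_option (\<theta> m) (?r x i)" for x i
    proof (cases "\<alpha> i")
      case (Some v)
      then show ?thesis using c(7) ray_vals(1)[OF c(3) Some] by (simp add: ray_act_def)
    qed (simp add: ray_act_def)
    show "D_chi \<theta> \<alpha> m' m'' \<le> D_chi \<theta> \<alpha> (m' * m) (m'' * m)"
      unfolding D_chi_def
    proof (rule ray_len_mono)
      show "dom (ray_meet (?r m') (?r m'')) \<subseteq> dom (ray_meet (?r (m' * m)) (?r (m'' * m)))"
        by (auto simp: ray_meet_def r split: if_splits)
      show "dom (ray_meet (?r m') (?r m'')) \<noteq> {}" using meet0[OF chi, of m' m''] by blast
    qed
  qed
  have L4: "\<And>m m' m''. D_chi \<theta> \<alpha> m m'' \<ge> min (D_chi \<theta> \<alpha> m m') (D_chi \<theta> \<alpha> m' m'')"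
  proof -
    fix m m' m''
    let ?A = "ray_meet (?r m) (?r m')" and ?B = "ray_meet (?r m') (?r m'')"
      and ?C = "ray_meet (?r m) (?r m'')"
    have dA: "\<forall>i j. j \<le> i \<longrightarrow> ?A i \<noteq> None \<longrightarrow> ?A j \<noteq> None"
      and dB: "\<forall>i j. j \<le> i \<longrightarrow> ?B i \<noteq> None \<longrightarrow> ?B j \<noteq> None"
      by (rule meet_down[OF act_down[OF c(3)]])+
    have key: "dom ?A \<inter> dom ?B \<subseteq> dom ?C"
      by (rule meet_key)
    show "D_chi \<theta> \<alpha> m m'' \<ge> min (D_chi \<theta> \<alpha> m m') (D_chi \<theta> \<alpha> m' m'')"
    proof (cases "ray_len ?A \<le> ray_len ?B")
      case True
      have neB: "dom ?B \<noteq> {}" using meet0[OF chi, of m' m''] by blast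
      have neA: "dom ?A \<noteq> {}" using meet0[OF chi, of m m'] by blast
      have "dom ?A \<subseteq> dom ?B"
      proof
        fix i assume "i \<in> dom ?A"
        hence "enat i \<le> ray_len ?A" by (rule ray_len_ge)
        hence "enat i \<le> ray_len ?B" using True by (rule order_trans)
        thus "i \<in> dom ?B" by (rule ray_len_down[OF dB _ neB])
      qed
      hence "dom ?A \<subseteq> dom ?C" using key by blast
      hence "ray_len ?A \<le> ray_len ?C" using neA by (rule ray_len_mono)
      thus ?thesis using True unfolding D_chi_def by simp
    next
      case False
      have neB: "dom ?B \<noteq> {}" using meet0[OF chi, of m' m''] by blast
      have neA: "dom ?A \<noteq> {}" using meet0[OF chi, of m m'] by blast
      have F: "ray_len ?B \<le> ray_len ?A" using False by simp
      have "dom ?B \<subseteq> dom ?A"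
      proof
        fix i assume "i \<in> dom ?B"
        hence "enat i \<le> ray_len ?B" by (rule ray_len_ge)
        hence "enat i \<le> ray_len ?A" using F by (rule order_trans)
        thus "i \<in> dom ?A" by (rule ray_len_down[OF dA _ neA])
      qed
      hence "dom ?B \<subseteq> dom ?C" using key by blast
      hence "ray_len ?B \<le> ray_len ?C" using neB by (rule ray_len_mono)
      thus ?thesis using F unfolding D_chi_def by (simp add: min_def)
    qed
  qed
  show ?thesis unfolding length_function_def using L1 L2 L3 L4 by blast
qed


lemma dom_l:
  assumes chi: "elliptic_Mtree V E r0 \<alpha> \<theta>" and l: "dep_tree V E r0 = enat l"
  shows "\<And>i. \<alpha> i \<noteq> None \<longleftrightarrow> i \<le> l"
proof -
  note c = chi_facts[OF chi]
  have up: "i \<le> l" if "\<alpha> i = Some x" for i x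
  proof -
    have "enat (dep V E r0 x) \<le> dep_tree V E r0"
      unfolding dep_tree_def using ray_vals(1)[OF c(3) that] by (rule SUP_upper)
    thus ?thesis using l ray_vals(2)[OF c(3) that] by (simp add: dep_def)
  qed
  let ?S = "(\<lambda>v. enat (dep V E r0 v)) ` V"
  have ne: "?S \<noteq> {}" using c(2) by auto
  have "Sup ?S = enat l" using l unfolding dep_tree_def by simp
  hence fin: "finite ?S" and "Max ?S = enat l" using ne unfolding Sup_enat_def by (auto split: if_splits)
  hence "enat l \<in> ?S" using Max_in[OF fin ne] by simp
  then obtain v where v: "v \<in> V" "dep V E r0 v = l" by auto
  then obtain i m where i: "i \<in> dom \<alpha>" "v = \<theta> m (the (\<alpha> i))"
    using c(8) unfolding alpha_transitive_def by blast
  then obtain x where x: "\<alpha> i = Some x" by auto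
  have "l = i" using act_vals(2)[OF chi x, of m] v i x by (simp add: dep_def)
  hence al: "\<alpha> l \<noteq> None" using x by simp
  show "\<alpha> i \<noteq> None \<longleftrightarrow> i \<le> l" for i using up ray_down[OF c(3) _ al] by blast
qed

lemma len_l:
  assumes chi: "elliptic_Mtree V E r0 \<alpha> \<theta>" and l: "dep_tree V E r0 = enat l"
  shows "ray_len \<alpha> = enat l"
proof -
  have "dom \<alpha> = {..l}" using dom_l[OF chi l] by auto
  moreover have "Max {..l} = l" by (rule Max_eqI) auto
  ultimately show ?thesis unfolding ray_len_def by simp
qed


lemma conv2: "2 * enat l - 2 * enat k = enat (2 * l - 2 * k)"
  by (simp add: numeral_eq_enat)

lemma part2:
  assumes chi: "elliptic_Mtree V E r0 \<alpha> \<theta>" and l: "dep_tree V E r0 = enat l"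
  shows "2 * enat l - 2 * D_chi \<theta> \<alpha> m m' = enat (tdist V E (\<theta> m (the (\<alpha> l))) (\<theta> m' (the (\<alpha> l))))"
proof -
  note c = chi_facts[OF chi]
  have dl: "\<And>i. \<alpha> i \<noteq> None \<longleftrightarrow> i \<le> l" by (rule dom_l[OF chi l])
  define a where "a = (\<lambda>j. \<theta> m (the (\<alpha> j)))"
  define b where "b = (\<lambda>j. \<theta> m' (the (\<alpha> j)))"
  have some: "\<alpha> j = Some (the (\<alpha> j))" if "j \<le> l" for j using dl[of j] that by auto
  have aV: "a j \<in> V" and ad: "tdist V E r0 (a j) = j" if "j \<le> l" for j
    using act_vals[OF chi some[OF that]] unfolding a_def by auto
  have bV: "b j \<in> V" and bd: "tdist V E r0 (b j) = j" if "j \<le> l" for j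
    using act_vals[OF chi some[OF that]] unfolding b_def by auto
  have aE: "(a j, a (Suc j)) \<in> E" if "Suc j \<le> l" for j
    using act_edge[OF chi some some[OF that]] that unfolding a_def by simp
  have bE: "(b j, b (Suc j)) \<in> E" if "Suc j \<le> l" for j
    using act_edge[OF chi some some[OF that]] that unfolding b_def by simp
  have uniq: "a i = b i" if "j \<le> l" "a j = b j" "i \<le> j" for i j
    using root_unique[OF chi _ _ that(3)] that dl unfolding a_def b_def by blast
  have symE: "sym E" using c(1) unfolding tree_def by blast
  define S where "S = {i. i \<le> l \<and> (\<forall>j\<le>i. a j = b j)}"
  have finS: "finite S" unfolding S_def by simp
  have a0: "\<alpha> 0 = Some r0" using c(3) unfolding ray_def by blast
  have "0 \<in> S" unfolding S_def a_def b_def using a0 theta_root[OF chi] by simp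
  hence neS: "S \<noteq> {}" by blast
  define k where "k = Max S"
  have kS: "k \<in> S" unfolding k_def using Max_in[OF finS neS] .
  hence kl: "k \<le> l" and kagree: "\<And>j. j \<le> k \<Longrightarrow> a j = b j" unfolding S_def by auto
  have kmax: "i \<le> k" if "i \<in> S" for i unfolding k_def using Max_ge[OF finS that] .
  have ra: "ray_act \<theta> m \<alpha> j = (if j \<le> l then Some (a j) else None)" for j
    using some[of j] dl[of j] unfolding ray_act_def a_def by (cases "j \<le> l") auto
  have rb: "ray_act \<theta> m' \<alpha> j = (if j \<le> l then Some (b j) else None)" for j
    using some[of j] dl[of j] unfolding ray_act_def b_def by (cases "j \<le> l") auto
  have domM: "dom (ray_meet (ray_act \<theta> m \<alpha>) (ray_act \<theta> m' \<alpha>)) = S"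
  proof (intro set_eqI iffI)
    fix i assume "i \<in> dom (ray_meet (ray_act \<theta> m \<alpha>) (ray_act \<theta> m' \<alpha>))"
    hence h: "\<forall>j\<le>i. ray_act \<theta> m \<alpha> j = ray_act \<theta> m' \<alpha> j" "ray_act \<theta> m \<alpha> i \<noteq> None"
      unfolding ray_meet_def dom_def by (auto split: if_splits)
    have il: "i \<le> l" using h(2) ra[of i] by (auto split: if_splits)
    have "\<forall>j\<le>i. a j = b j"
    proof (intro allI impI)
      fix j assume "j \<le> i"
      thus "a j = b j" using h(1) ra[of j] rb[of j] il by auto
    qed
    thus "i \<in> S" using il unfolding S_def by blast
  next
    fix i assume "i \<in> S"
    hence il: "i \<le> l" and ag: "\<forall>j\<le>i. a j = b j" unfolding S_def by auto
    have "\<forall>j\<le>i. ray_act \<theta> m \<alpha> j = ray_act \<theta> m' \<alpha> j"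
      using ag il ra rb by auto
    thus "i \<in> dom (ray_meet (ray_act \<theta> m \<alpha>) (ray_act \<theta> m' \<alpha>))"
      unfolding ray_meet_def dom_def using ra[of i] il by simp
  qed
  have D: "D_chi \<theta> \<alpha> m m' = enat k" unfolding D_chi_def ray_len_def domM k_def using finS by simp
  define A where "A = map a [k..<Suc l]"
  define B where "B = map b [Suc k..<Suc l]"
  define P where "P = rev A @ B"
  have A1: "A = map a [k..<l] @ [a l]" unfolding A_def using kl by simp
  have hdA: "hd A = a k" unfolding A_def using kl by (simp add: hd_map del: upt_Suc)
  have hdP: "hd P = a l" unfolding P_def A1 by simp
  have lastP: "last P = b l"
  proof (cases "k < l")
    case True
    hence "B \<noteq> []" unfolding B_def by simp
    moreover have "last B = b l" unfolding B_def using True by simp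
    ultimately show ?thesis unfolding P_def by simp
  next
    case False
    hence "k = l" using kl by simp
    hence "B = []" "A = [a l]" unfolding A1 unfolding B_def by simp_all
    thus ?thesis unfolding P_def using kagree[of l] \<open>k = l\<close> by simp
  qed
  have setP: "set P \<subseteq> V" unfolding P_def A_def B_def using aV bV by (auto simp del: upt_Suc)
  have sA: "successively (\<lambda>x y. (x, y) \<in> E) A"
    unfolding A_def by (rule succ_map_upt) (use aE in simp)
  have sA': "successively (\<lambda>x y. (y, x) \<in> E) A"
    using sA by (rule successively_mono) (use symE in \<open>auto dest: symD\<close>)
  have sB: "successively (\<lambda>x y. (x, y) \<in> E) B"
    unfolding B_def by (rule succ_map_upt) (use bE in simp)
  have junc: "B = [] \<or> (last (rev A), hd B) \<in> E"
  proof (cases "k < l")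
    case True
    have "hd B = b (Suc k)" unfolding B_def using True by (simp add: hd_map del: upt_Suc)
    moreover have "A \<noteq> []" unfolding A1 by simp
    hence "last (rev A) = b k" using hdA kagree[of k] by (simp add: last_rev)
    ultimately show ?thesis using bE[of k] True by simp
  next
    case False thus ?thesis unfolding B_def by simp
  qed
  have succP: "successively (\<lambda>x y. (x, y) \<in> E) P"
    unfolding P_def successively_append_iff using sA' sB junc by simp
  have injA: "inj_on a {k..<Suc l}" by (rule inj_onI) (metis ad atLeastLessThan_iff less_Suc_eq_le)
  have injB: "inj_on b {Suc k..<Suc l}" by (rule inj_onI) (metis bd atLeastLessThan_iff less_Suc_eq_le)
  have disj: "set A \<inter> set B = {}"
  proof (rule ccontr)
    assume "set A \<inter> set B \<noteq> {}"
    then obtain i j where ij: "k \<le> i" "i \<le> l" "Suc k \<le> j" "j \<le> l" "a i = b j"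
      unfolding A_def B_def by (auto simp: less_Suc_eq_le simp del: upt_Suc)
    have "i = j" using ad[OF ij(2)] bd[OF ij(4)] ij(5) by simp
    hence "\<forall>jj\<le>j. a jj = b jj" using uniq[OF ij(4)] ij(5) by blast
    hence "j \<in> S" using ij(4) unfolding S_def by blast
    thus False using kmax ij(3) by fastforce
  qed
  have distP: "distinct P" unfolding P_def using injA injB disj
    by (simp add: A_def B_def distinct_map del: upt_Suc)
  have ne: "P \<noteq> []" unfolding P_def A1 by simp
  have g: "gpath V E P (a l) (b l)"
    unfolding gpath_def walk_succ using ne hdP lastP setP succP distP by blast
  have len: "length P = length A + length B" unfolding P_def by simp
  have lA: "length A = Suc l - k" and lB: "length B = Suc l - Suc k" unfolding A_def B_def by (simp_all del: upt_Suc)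
  have "tdist V E (a l) (b l) = length P - 1" by (rule tdist_gpath[OF c(1) g])
  also have "\<dots> = 2 * l - 2 * k" unfolding len lA lB using kl by arith
  finally have "tdist V E (a l) (b l) = 2 * l - 2 * k" .
  thus ?thesis unfolding D conv2 a_def b_def by simp
qed


lemma D_le:
  assumes chi: "elliptic_Mtree V E r0 \<alpha> \<theta>" and l: "dep_tree V E r0 = enat l"
  shows "\<exists>k. D_chi \<theta> \<alpha> m m' = enat k \<and> k \<le> l"
proof -
  have L2: "D_chi \<theta> \<alpha> m m' \<le> D_chi \<theta> \<alpha> m m"
    using part1[OF chi] unfolding length_function_def by blast
  have "dom (ray_act \<theta> m \<alpha>) = dom \<alpha>" unfolding ray_act_def dom_def by simp
  hence "D_chi \<theta> \<alpha> m m = ray_len \<alpha>" unfolding D_chi_def meet_self ray_len_def by simp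
  hence "D_chi \<theta> \<alpha> m m' \<le> enat l" using L2 len_l[OF chi l] by simp
  thus ?thesis by (metis enat_ile enat_ord_simps(1))
qed

lemma D_self:
  assumes chi: "elliptic_Mtree V E r0 \<alpha> \<theta>" and l: "dep_tree V E r0 = enat l"
  shows "D_chi \<theta> \<alpha> m m = enat l"
proof -
  have "dom (ray_act \<theta> m \<alpha>) = dom \<alpha>" unfolding ray_act_def dom_def by simp
  hence "D_chi \<theta> \<alpha> m m = ray_len \<alpha>" unfolding D_chi_def meet_self ray_len_def by simp
  thus ?thesis using len_l[OF chi l] by simp
qed

lemma part3:
  assumes chi: "elliptic_Mtree V E r0 \<alpha> \<theta>" and l: "dep_tree V E r0 = enat l"
    and sf: "strongly_faithful \<alpha> \<theta>"
  shows "ultrametric (\<lambda>m m'. 2 * enat l - 2 * D_chi \<theta> \<alpha> m m')"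
proof -
  note c = chi_facts[OF chi]
  note LF = part1[OF chi, unfolded length_function_def]
  define kk where "kk = (\<lambda>m m'. THE k. D_chi \<theta> \<alpha> m m' = enat k)"
  have Dk: "D_chi \<theta> \<alpha> m m' = enat (kk m m') \<and> kk m m' \<le> l" for m m'
  proof -
    obtain k where k: "D_chi \<theta> \<alpha> m m' = enat k" "k \<le> l" using D_le[OF chi l] by blast
    hence "kk m m' = k" unfolding kk_def by simp
    thus ?thesis using k by simp
  qed
  have d: "2 * enat l - 2 * D_chi \<theta> \<alpha> m m' = enat (2 * l - 2 * kk m m')" for m m'
    using Dk[of m m'] conv2 by simp
  have fin: "\<forall>x y. 2 * enat l - 2 * D_chi \<theta> \<alpha> x y \<noteq> \<infinity>" unfolding d by simp
  have zero: "2 * enat l - 2 * D_chi \<theta> \<alpha> x y = 0 \<longleftrightarrow> x = y" for x y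
  proof
    assume "2 * enat l - 2 * D_chi \<theta> \<alpha> x y = 0"
    hence "kk x y = l" unfolding d using Dk[of x y] by (simp add: zero_enat_def)
    hence D: "enat l \<le> ray_len (ray_meet (ray_act \<theta> x \<alpha>) (ray_act \<theta> y \<alpha>))"
      using Dk[of x y] unfolding D_chi_def by simp
    have "l \<in> dom (ray_meet (ray_act \<theta> x \<alpha>) (ray_act \<theta> y \<alpha>))"
      by (rule ray_len_down[OF meet_down[OF act_down[OF c(3)]] D]) (use meet0[OF chi, of x y] in blast)
    hence ag: "\<forall>j\<le>l. ray_act \<theta> x \<alpha> j = ray_act \<theta> y \<alpha> j"
      unfolding ray_meet_def dom_def by (auto split: if_splits)
    have "ray_act \<theta> x \<alpha> = ray_act \<theta> y \<alpha>"
    proof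
      fix j show "ray_act \<theta> x \<alpha> j = ray_act \<theta> y \<alpha> j"
      proof (cases "j \<le> l")
        case False
        hence "\<alpha> j = None" using dom_l[OF chi l, of j] by blast
        thus ?thesis unfolding ray_act_def by simp
      qed (use ag in blast)
    qed
    thus "x = y" using sf unfolding strongly_faithful_def by blast
  next
    assume "x = y"
    thus "2 * enat l - 2 * D_chi \<theta> \<alpha> x y = 0" using D_self[OF chi l, of x] conv2[of l l]
      by (simp add: zero_enat_def)
  qed
  have sym: "\<forall>x y. 2 * enat l - 2 * D_chi \<theta> \<alpha> x y = 2 * enat l - 2 * D_chi \<theta> \<alpha> y x"
    using LF by metis
  have ultra: "2 * enat l - 2 * D_chi \<theta> \<alpha> x z \<le>
      max (2 * enat l - 2 * D_chi \<theta> \<alpha> x y) (2 * enat l - 2 * D_chi \<theta> \<alpha> y z)" for x y z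
  proof -
    have "min (D_chi \<theta> \<alpha> x y) (D_chi \<theta> \<alpha> y z) \<le> D_chi \<theta> \<alpha> x z" using LF by blast
    hence "min (kk x y) (kk y z) \<le> kk x z" using Dk[of x y] Dk[of y z] Dk[of x z] by (simp add: min_def split: if_splits)
    hence "2 * l - 2 * kk x z \<le> max (2 * l - 2 * kk x y) (2 * l - 2 * kk y z)" by (simp add: min_def max_def split: if_splits; arith)
    thus ?thesis unfolding d by (simp add: max_def split: if_splits)
  qed
  show ?thesis unfolding ultrametric_def using fin zero sym ultra by blast
qed

theorem proposition4p5:
  fixes V :: "'v set" and E :: "('v \<times> 'v) set" and r0 :: 'v
    and \<alpha> :: "nat \<Rightarrow> 'v option" and \<theta> :: "'m::monoid_mult \<Rightarrow> 'v \<Rightarrow> 'v"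
  assumes chi: "elliptic_Mtree V E r0 \<alpha> \<theta>"
  shows "length_function (D_chi \<theta> \<alpha>) \<and>
    (\<forall>l. dep_tree V E r0 = enat l \<longrightarrow>
           (\<forall>m m'. 2 * enat l - 2 * D_chi \<theta> \<alpha> m m'
                  = enat (tdist V E (\<theta> m (the (\<alpha> l))) (\<theta> m' (the (\<alpha> l)))))) \<and>
    (\<forall>l. dep_tree V E r0 = enat l \<longrightarrow> strongly_faithful \<alpha> \<theta> \<longrightarrow>
           ultrametric (\<lambda>m m'. 2 * enat l - 2 * D_chi \<theta> \<alpha> m m'))"
  using part1[OF chi] part2[OF chi] part3[OF chi] by blast

end
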